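(* Let $A$ be a finite alphabet, $a\in A$, and let $M$ and $N$ be finite $\mathcal J$-trivial monoids with $|M|=m$ and $|N|=n$. Let $\rho$ be the number of elements in a longest strict $\leq_{\mathcal R}$-chain in $M$ and $\lambda$ the number of elements in a longest strict $\leq_{\mathcal L}$-chain in $N$. Let $\varphi:A^*\to M$ and $\psi:A^*\to N$ be homomorphisms, and let $\mu_a:A^*\to M\Diamond N$ be the associated homomorphism. Then for every $u\in A^*$ the set $(\mu_a(u))_{1,2}$ has at most $\rho+\lambda-1$ elements (and $\rho+\lambda-1\leq m+n-1$). In particular, $$|\mu_a(A^* )|\leq mn\left(\binom{mn}{0}+\binom{mn}{1}+\dots+\binom{mn}{\rho+\lambda-1}\right).$$
   Context: On a monoid $O$: $p\leq_{\mathcal R} q$ iff $p=qr$ for some $r\in O$; $p\leq_{\mathcal L} q$ iff $p=sq$ for some $s\in O$; $p\leq_{\mathcal J} q$ iff $p=sqr$ for some $r,s\in O$. $O$ is $\mathcal J$-trivial if $p\leq_{\mathcal J}q\leq_{\mathcal J}p$ implies $p=q$. For finite monoids $M,N$, the Schützenberger product $M\Diamond N$ is the set of $2\times2$ matrices $P$ with $P_{1,1}\in M$, $P_{2,2}\in N$, $P_{2,1}=\emptyset$, $P_{1,2}\subseteq M\times N$, with multiplication $(PQ)_{1,1}=P_{1,1}Q_{1,1}$, $(PQ)_{2,2}=P_{2,2}Q_{2,2}$, $(PQ)_{1,2}=\{(P_{1,1}x,y)\mid (x,y)\in Q_{1,2}\}\cup\{(z,tQ_{2,2})\mid (z,t)\in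 P_{1,2}\}$. Given $\varphi,\psi$ and $a\in A$, $\mu_a$ is defined by $(\mu_a(u))_{1,1}=\varphi(u)$, $(\mu_a(u))_{2,2}=\psi(u)$, $(\mu_a(u))_{1,2}=\{(\varphi(u'),\psi(u''))\mid u=u'au'',\ u',u''\in A^*\}$. *)

theory Defs
  imports Main
begin

definition R_le :: "'m::monoid_mult \<Rightarrow> 'm \<Rightarrow> bool" where
  "R_le p q \<longleftrightarrow> (\<exists>r. p = q * r)"

definition L_le :: "'m::monoid_mult \<Rightarrow> 'm \<Rightarrow> bool" where
  "L_le p q \<longleftrightarrow> (\<exists>s. p = s * q)"

definition J_le :: "'m::monoid_mult \<Rightarrow> 'm \<Rightarrow> bool" where
  "J_le p q \<longleftrightarrow> (\<exists>r s. p = s * q * r)"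

definition J_trivial :: "'m::monoid_mult itself \<Rightarrow> bool" where
  "J_trivial _ \<longleftrightarrow> (\<forall>p q::'m. J_le p q \<and> J_le q p \<longrightarrow> p = q)"

definition R_lt :: "'m::monoid_mult \<Rightarrow> 'm \<Rightarrow> bool" where
  "R_lt p q \<longleftrightarrow> R_le p q \<and> \<not> R_le q p"

definition L_lt :: "'m::monoid_mult \<Rightarrow> 'm \<Rightarrow> bool" where
  "L_lt p q \<longleftrightarrow> L_le p q \<and> \<not> L_le q p"

definition longest_R_chain :: "'m::{monoid_mult,finite} itself \<Rightarrow> nat" where
  "longest_R_chain _ = Max {length xs | xs :: 'm list. sorted_wrt (\<lambda>p q. R_lt q p) xs}"

definition longest_L_chain :: "'m::{monoid_mult,finite} itself \<Rightarrow> nat" where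
  "longest_L_chain _ = Max {length xs | xs :: 'm list. sorted_wrt (\<lambda>p q. L_lt q p) xs}"

definition monoid_hom :: "('a list \<Rightarrow> 'm::monoid_mult) \<Rightarrow> bool" where
  "monoid_hom f \<longleftrightarrow> f [] = 1 \<and> (\<forall>u v. f (u @ v) = f u * f v)"

text \<open>Element of the Schuetzenberger product M \<Diamond> N, represented as the triple
  (entry (1,1), entry (1,2), entry (2,2)); the entry (2,1) is always empty.\<close>
type_synonym ('m,'n) spmat = "'m \<times> ('m \<times> 'n) set \<times> 'n"

definition sp_mult :: "('m::monoid_mult,'n::monoid_mult) spmat \<Rightarrow> ('m,'n) spmat \<Rightarrow> ('m,'n) spmat" where
  "sp_mult P Q = (case P of (p11, p12, p22) \<Rightarrow> case Q of (q11, q12, q22) \<Rightarrow>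
     (p11 * q11, {(p11 * x, y) | x y. (x, y) \<in> q12} \<union> {(z, t * q22) | z t. (z, t) \<in> p12}, p22 * q22))"

definition mu :: "('a list \<Rightarrow> 'm) \<Rightarrow> ('a list \<Rightarrow> 'n) \<Rightarrow> 'a \<Rightarrow> 'a list \<Rightarrow> ('m,'n) spmat" where
  "mu \<phi> \<psi> a u = (\<phi> u, {(\<phi> u', \<psi> u'') | u' u''. u = u' @ [a] @ u''}, \<psi> u)"

end

theory Submission
  imports Defs
begin

lemma sw_cmp:
  assumes "sorted_wrt P xs" "y \<in> set xs" "z \<in> set xs" "y \<noteq> z"
  shows "P y z \<or> P z y"
proof -
  obtain i where i: "i < length xs" "y = xs ! i" using assms(2) by (auto simp: in_set_conv_nth)
  obtain j where j: "j < length xs" "z = xs ! j" using assms(3) by (auto simp: in_set_conv_nth)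
  have "i \<noteq> j" using i j assms(4) by auto
  then consider "i < j" | "j < i" by linarith
  then show ?thesis using sorted_wrt_nth_less[OF assms(1)] i j by cases auto
qed

lemma card_pairs:
  assumes "sorted_wrt (\<lambda>s t. r1 (fst t) (fst s) \<and> r2 (snd s) (snd t)) L"
    and a1: "\<And>x y. r1 x y \<Longrightarrow> r1 y x \<Longrightarrow> x = y"
    and a2: "\<And>x y. r2 x y \<Longrightarrow> r2 y x \<Longrightarrow> x = y"
  shows "card (set L) \<le> card (fst ` set L) + card (snd ` set L) - 1"
  using assms(1)
proof (induction L)
  case Nil
  then show ?case by simp
next
  case (Cons x L')
  obtain p q where x: "x = (p, q)" by fastforce
  have s': "sorted_wrt (\<lambda>s t. r1 (fst t) (fst s) \<and> r2 (snd s) (snd t)) L'"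
    and rel: "\<And>y. y \<in> set L' \<Longrightarrow> r1 (fst y) p \<and> r2 q (snd y)"
    using Cons.prems x by auto
  have IH: "card (set L') \<le> card (fst ` set L') + card (snd ` set L') - 1"
    using Cons.IH s' by blast
  show ?case
  proof (cases "L' = []")
    case True
    then show ?thesis by simp
  next
    case False
    have ne1: "card (fst ` set L') \<ge> 1" using False
      by (simp add: Suc_le_eq card_gt_0_iff)
    show ?thesis
    proof (cases "x \<in> set L'")
      case True
      then have "card (set (x # L')) = card (set L')" by (simp add: insert_absorb)
      moreover have "card (fst ` set L') \<le> card (fst ` set (x # L'))"
        by (rule card_mono) auto
      moreover have "card (snd ` set L') \<le> card (snd ` set (x # L'))"
        by (rule card_mono) auto
      ultimately show ?thesis using IH by linarith
    next
      case xn: False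
      have key: "p \<notin> fst ` set L' \<or> q \<notin> snd ` set L'"
      proof (rule ccontr)
        assume "\<not> ?thesis"
        then obtain qy pz where y: "(p, qy) \<in> set L'" and z: "(pz, q) \<in> set L'" by force
        have yx: "(p, qy) \<noteq> x" using y xn by auto
        have zx: "(pz, q) \<noteq> x" using z xn by auto
        have "qy \<noteq> q" using yx x by auto
        have "pz \<noteq> p" using zx x by auto
        have r1z: "r1 pz p" using rel[OF z] by simp
        have r2y: "r2 q qy" using rel[OF y] by simp
        have "(p, qy) \<noteq> (pz, q)" using \<open>pz \<noteq> p\<close> by auto
        from sw_cmp[OF s' y z this]
        show False
        proof
          assume "r1 (fst (pz, q)) (fst (p, qy)) \<and> r2 (snd (p, qy)) (snd (pz, q))"
          then have h: "r2 qy q" by simp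
          show False using a2[OF h r2y] \<open>qy \<noteq> q\<close> by simp
        next
          assume "r1 (fst (p, qy)) (fst (pz, q)) \<and> r2 (snd (pz, q)) (snd (p, qy))"
          then have h: "r1 p pz" by simp
          show False using a1[OF h r1z] \<open>pz \<noteq> p\<close> by simp
        qed
      qed
      have c: "card (set (x # L')) = Suc (card (set L'))" using xn by simp
      have f: "fst ` set (x # L') = insert p (fst ` set L')" using x by simp
      have g: "snd ` set (x # L') = insert q (snd ` set L')" using x by simp
      have "card (insert p (fst ` set L')) \<ge> card (fst ` set L')"
        by (rule card_mono) auto
      moreover have "card (insert q (snd ` set L')) \<ge> card (snd ` set L')"
        by (rule card_mono) auto
      moreover have "card (insert p (fst ` set L')) = Suc (card (fst ` set L'))
          \<or> card (insert q (snd ` set L')) = Suc (card (snd ` set L'))"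
        using key by auto
      ultimately show ?thesis using IH ne1 unfolding c f g by linarith
    qed
  qed
qed

lemma sw_remdups: "sorted_wrt P xs \<Longrightarrow> sorted_wrt P (remdups xs)"
  by (induction xs) auto

lemma sw_distinct:
  assumes "sorted_wrt P xs" "\<And>x. \<not> P x x" shows "distinct xs"
  using assms by (induction xs) auto

lemma chain_finite:
  "finite {length xs | xs :: 'm::finite list. sorted_wrt (\<lambda>p q. r q p \<and> \<not> r p q) xs}"
  and chain_bound:
  "Max {length xs | xs :: 'm::finite list. sorted_wrt (\<lambda>p q. r q p \<and> \<not> r p q) xs} \<le> card (UNIV :: 'm set)"
proof -
  have sub: "{length xs | xs :: 'm::finite list. sorted_wrt (\<lambda>p q. r q p \<and> \<not> r p q) xs} \<subseteq> {..card (UNIV :: 'm set)}"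
  proof
    fix k assume "k \<in> {length xs | xs :: 'm::finite list. sorted_wrt (\<lambda>p q. r q p \<and> \<not> r p q) xs}"
    then obtain xs :: "'m list" where k: "k = length xs" and s: "sorted_wrt (\<lambda>p q. r q p \<and> \<not> r p q) xs" by auto
    have "distinct xs" using sw_distinct[OF s] by auto
    then have "length xs = card (set xs)" by (simp add: distinct_card)
    also have "\<dots> \<le> card (UNIV :: 'm set)" by (rule card_mono) auto
    finally show "k \<in> {..card (UNIV :: 'm set)}" using k by simp
  qed
  show "finite {length xs | xs :: 'm::finite list. sorted_wrt (\<lambda>p q. r q p \<and> \<not> r p q) xs}"
    using sub finite_subset by blast
  have ne: "{length xs | xs :: 'm::finite list. sorted_wrt (\<lambda>p q. r q p \<and> \<not> r p q) xs} \<noteq> {}"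
  proof -
    have "length ([]::'m list) \<in> {length xs | xs :: 'm::finite list. sorted_wrt (\<lambda>p q. r q p \<and> \<not> r p q) xs}" by auto
    then show ?thesis by blast
  qed
  show "Max {length xs | xs :: 'm::finite list. sorted_wrt (\<lambda>p q. r q p \<and> \<not> r p q) xs} \<le> card (UNIV :: 'm set)"
    using sub ne \<open>finite _\<close> by (subst Max_le_iff) auto
qed

lemma chain_ge1:
  "1 \<le> Max {length xs | xs :: 'm::finite list. sorted_wrt (\<lambda>p q. r q p \<and> \<not> r p q) xs}"
proof -
  have "length [undefined::'m] \<in> {length xs | xs :: 'm::finite list. sorted_wrt (\<lambda>p q. r q p \<and> \<not> r p q) xs}"
    by (intro CollectI exI[of _ "[undefined]"]) simp
  then show ?thesis using Max_ge[OF chain_finite] by fastforce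
qed

lemma strictify:
  assumes "sorted_wrt (\<lambda>p q. r q p) xs" "distinct xs" "\<And>x y. r x y \<Longrightarrow> r y x \<Longrightarrow> x = y"
  shows "sorted_wrt (\<lambda>p q. r q p \<and> \<not> r p q) xs"
  using assms(1,2) by (induction xs) (auto dest: assms(3))

lemma chain_card:
  fixes xs :: "'m::finite list"
  assumes s: "sorted_wrt (\<lambda>p q. r q p) xs" and anti: "\<And>x y. r x y \<Longrightarrow> r y x \<Longrightarrow> x = y"
  shows "card (set xs) \<le> Max {length xs | xs :: 'm::finite list. sorted_wrt (\<lambda>p q. r q p \<and> \<not> r p q) xs}"
proof -
  have s1: "sorted_wrt (\<lambda>p q. r q p) (remdups xs)" by (rule sw_remdups[OF s])
  have "distinct (remdups xs)" by simp
  have s2: "sorted_wrt (\<lambda>p q. r q p \<and> \<not> r p q) (remdups xs)"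
    using strictify[OF s1 \<open>distinct (remdups xs)\<close>] anti by blast
  have "card (set xs) = length (remdups xs)" by (simp add: length_remdups_card_conv)
  also have "\<dots> \<le> Max {length xs | xs :: 'm::finite list. sorted_wrt (\<lambda>p q. r q p \<and> \<not> r p q) xs}"
    by (rule Max_ge[OF chain_finite]) (use s2 in blast)
  finally show ?thesis .
qed


definition plist :: "('a list \<Rightarrow> 'm) \<Rightarrow> ('a list \<Rightarrow> 'n) \<Rightarrow> 'a \<Rightarrow> 'a list \<Rightarrow> ('m \<times> 'n) list" where
  "plist \<phi> \<psi> a u = map (\<lambda>i. (\<phi> (take i u), \<psi> (drop (Suc i) u))) (filter (\<lambda>i. u!i = a) [0..<length u])"

lemma set_plist: "fst (snd (mu \<phi> \<psi> a u)) = set (plist \<phi> \<psi> a u)"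
proof -
  have "{(\<phi> u', \<psi> u'') | u' u''. u = u' @ [a] @ u''} = set (plist \<phi> \<psi> a u)"
  proof (intro equalityI subsetI)
    fix x assume "x \<in> {(\<phi> u', \<psi> u'') | u' u''. u = u' @ [a] @ u''}"
    then obtain u' u'' where x: "x = (\<phi> u', \<psi> u'')" and u: "u = u' @ [a] @ u''" by blast
    let ?i = "length u'"
    have "?i < length u" "u ! ?i = a" "take ?i u = u'" "drop (Suc ?i) u = u''" using u by auto
    then show "x \<in> set (plist \<phi> \<psi> a u)" unfolding plist_def x by force
  next
    fix x assume "x \<in> set (plist \<phi> \<psi> a u)"
    then obtain i where i: "i < length u" "u ! i = a" and x: "x = (\<phi> (take i u), \<psi> (drop (Suc i) u))"
      unfolding plist_def by auto
    have "u = take i u @ [a] @ drop (Suc i) u" using i id_take_nth_drop by fastforce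
    then show "x \<in> {(\<phi> u', \<psi> u'') | u' u''. u = u' @ [a] @ u''}" using x by blast
  qed
  then show ?thesis by (simp add: mu_def)
qed

lemma sorted_plist:
  assumes "monoid_hom \<phi>" "monoid_hom \<psi>"
  shows "sorted_wrt (\<lambda>s t. R_le (fst t) (fst s) \<and> L_le (snd s) (snd t)) (plist \<phi> \<psi> a u)"
proof -
  have "R_le (\<phi> (take j u)) (\<phi> (take i u)) \<and> L_le (\<psi> (drop (Suc i) u)) (\<psi> (drop (Suc j) u))"
    if "i < j" for i j
  proof
    have "take j u = take i u @ take (j - i) (drop i u)"
      using take_add[of i "j - i" u] that by simp
    then show "R_le (\<phi> (take j u)) (\<phi> (take i u))"
      using assms(1) unfolding R_le_def monoid_hom_def by metis
    have "drop (Suc i) u = take (j - i) (drop (Suc i) u) @ drop (j - i) (drop (Suc i) u)" by (simp only: append_take_drop_id)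
    moreover have "drop (j - i) (drop (Suc i) u) = drop (Suc j) u" using that by simp
    ultimately show "L_le (\<psi> (drop (Suc i) u)) (\<psi> (drop (Suc j) u))"
      using assms(2) unfolding L_le_def monoid_hom_def by metis
  qed
  then have "sorted_wrt (\<lambda>i j. R_le (\<phi> (take j u)) (\<phi> (take i u)) \<and> L_le (\<psi> (drop (Suc i) u)) (\<psi> (drop (Suc j) u))) [0..<length u]"
    by (intro sorted_wrt_mono_rel[OF _ sorted_wrt_upt]) auto
  then show ?thesis unfolding plist_def sorted_wrt_map by (intro sorted_wrt_filter) simp
qed

lemma R_anti: "J_trivial TYPE('m::monoid_mult) \<Longrightarrow> R_le (x::'m) y \<Longrightarrow> R_le y x \<Longrightarrow> x = y"
  unfolding J_trivial_def J_le_def R_le_def by (metis mult_1_left)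

lemma L_anti: "J_trivial TYPE('m::monoid_mult) \<Longrightarrow> L_le (x::'m) y \<Longrightarrow> L_le y x \<Longrightarrow> x = y"
  unfolding J_trivial_def J_le_def L_le_def by (metis mult_1_right)

lemma card_small_subsets:
  "card {S :: 'x::finite set. card S \<le> K} = (\<Sum>i = 0..K. card (UNIV :: 'x set) choose i)"
proof -
  have "{S :: 'x set. card S \<le> K} = (\<Union>i\<in>{0..K}. {S. S \<subseteq> UNIV \<and> card S = i})" by auto
  moreover have "card (\<Union>i\<in>{0..K}. {S :: 'x set. S \<subseteq> UNIV \<and> card S = i}) = (\<Sum>i = 0..K. card {S :: 'x set. S \<subseteq> UNIV \<and> card S = i})"
    by (rule card_UN_disjoint) auto
  ultimately have "card {S :: 'x set. card S \<le> K} = (\<Sum>i = 0..K. card {S :: 'x set. S \<subseteq> UNIV \<and> card S = i})"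
    by simp
  then show ?thesis using n_subsets[of "UNIV :: 'x set"] by simp
qed

theorem proposition6:
  fixes a :: "'a::finite"
    and \<phi> :: "'a list \<Rightarrow> 'm::{monoid_mult,finite}"
    and \<psi> :: "'a list \<Rightarrow> 'n::{monoid_mult,finite}"
  assumes "J_trivial TYPE('m)" and "J_trivial TYPE('n)"
    and "monoid_hom \<phi>" and "monoid_hom \<psi>"
  shows "(\<forall>u. card (fst (snd (mu \<phi> \<psi> a u)))
              \<le> longest_R_chain TYPE('m) + longest_L_chain TYPE('n) - 1)
    \<and> longest_R_chain TYPE('m) + longest_L_chain TYPE('n) - 1 \<le> card (UNIV :: 'm set) + card (UNIV :: 'n set) - 1
    \<and> card (range (mu \<phi> \<psi> a))
        \<le> card (UNIV :: 'm set) * card (UNIV :: 'n set) *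
          (\<Sum>i = 0..longest_R_chain TYPE('m) + longest_L_chain TYPE('n) - 1.
              (card (UNIV :: 'm set) * card (UNIV :: 'n set)) choose i)"
proof (intro conjI)
  let ?K = "longest_R_chain TYPE('m) + longest_L_chain TYPE('n) - 1"
  have rho: "longest_R_chain TYPE('m) = Max {length xs | xs :: 'm list. sorted_wrt (\<lambda>p q. R_le q p \<and> \<not> R_le p q) xs}"
    unfolding longest_R_chain_def R_lt_def ..
  have lam: "longest_L_chain TYPE('n) = Max {length xs | xs :: 'n list. sorted_wrt (\<lambda>p q. L_le q p \<and> \<not> L_le p q) xs}"
    unfolding longest_L_chain_def L_lt_def ..
  show A: "\<forall>u. card (fst (snd (mu \<phi> \<psi> a u))) \<le> ?K"
  proof
    fix u
    let ?L = "plist \<phi> \<psi> a u"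
    have s: "sorted_wrt (\<lambda>s t. R_le (fst t) (fst s) \<and> L_le (snd s) (snd t)) ?L"
      using sorted_plist[OF assms(3,4)] .
    have c: "card (set ?L) \<le> card (fst ` set ?L) + card (snd ` set ?L) - 1"
      by (rule card_pairs[OF s]) (use R_anti[OF assms(1)] L_anti[OF assms(2)] in auto)
    have s1: "sorted_wrt (\<lambda>p q. R_le q p) (map fst ?L)"
      unfolding sorted_wrt_map by (rule sorted_wrt_mono_rel[OF _ s]) auto
    have s2: "sorted_wrt (\<lambda>p q. L_le q p) (rev (map snd ?L))"
      unfolding sorted_wrt_rev sorted_wrt_map by (rule sorted_wrt_mono_rel[OF _ s]) auto
    have c1: "card (fst ` set ?L) \<le> longest_R_chain TYPE('m)"
      using chain_card[OF s1 R_anti[OF assms(1)]] unfolding rho by simp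
    have c2: "card (snd ` set ?L) \<le> longest_L_chain TYPE('n)"
      using chain_card[OF s2 L_anti[OF assms(2)]] unfolding lam by simp
    show "card (fst (snd (mu \<phi> \<psi> a u))) \<le> ?K"
      unfolding set_plist using c c1 c2 by linarith
  qed
  show "?K \<le> card (UNIV :: 'm set) + card (UNIV :: 'n set) - 1"
    using chain_bound[of "R_le :: 'm \<Rightarrow> 'm \<Rightarrow> bool"] chain_bound[of "L_le :: 'n \<Rightarrow> 'n \<Rightarrow> bool"] unfolding rho lam by linarith
  have "range (mu \<phi> \<psi> a) \<subseteq> UNIV \<times> {S :: ('m \<times> 'n) set. card S \<le> ?K} \<times> UNIV"
    using A by (auto simp: mu_def)
  moreover have fin: "finite ((UNIV :: 'm set) \<times> {S :: ('m \<times> 'n) set. card S \<le> ?K} \<times> (UNIV :: 'n set))"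
  proof -
    have f1: "finite (UNIV :: 'm set)" by (rule finite_class.finite_UNIV)
    have f2: "finite (UNIV :: 'n set)" by (rule finite_class.finite_UNIV)
    have f3: "finite {S :: ('m \<times> 'n) set. card S \<le> ?K}"
      by (rule finite_subset[OF subset_UNIV finite_class.finite_UNIV])
    show ?thesis by (intro finite_cartesian_product f1 f2 f3)
  qed
  ultimately have "card (range (mu \<phi> \<psi> a)) \<le> card ((UNIV :: 'm set) \<times> {S :: ('m \<times> 'n) set. card S \<le> ?K} \<times> (UNIV :: 'n set))"
    using card_mono[OF fin] by simp
  also have "\<dots> = card (UNIV :: 'm set) * (card {S :: ('m \<times> 'n) set. card S \<le> ?K} * card (UNIV :: 'n set))"
    by (simp add: card_cartesian_product)
  also have "card {S :: ('m \<times> 'n) set. card S \<le> ?K} = (\<Sum>i = 0..?K. (card (UNIV :: 'm set) * card (UNIV :: 'n set)) choose i)"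
    unfolding card_small_subsets by (simp add: UNIV_Times_UNIV[symmetric] card_cartesian_product del: UNIV_Times_UNIV)
  finally show "card (range (mu \<phi> \<psi> a)) \<le> card (UNIV :: 'm set) * card (UNIV :: 'n set) *
          (\<Sum>i = 0..?K. (card (UNIV :: 'm set) * card (UNIV :: 'n set)) choose i)"
    by (simp add: ac_simps)
qed

end
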